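(* Let $D_+, D_-$ be a pair of SBP operators of order $q\ge1$ on $[a,b]$ with associated data $H,S,\mathbf{p}_0,\mathbf{p}_n,\mathbf{x}$, which is nullspace consistent but does not have the eigenvalue property. Let $\|\cdot\|$ be any norm on $\mathbb{R}^{(n+1)\times(n+1)}$ and $\varepsilon>0$. Then there exists a real symmetric positive semidefinite matrix $S'\in\mathbb{R}^{(n+1)\times(n+1)}$ with $S'\mathbf{x}^j=\mathbf{0}$ for $j=0,\dots,q$, such that, setting $D_+' = D_+ + \tfrac12 H^{-1}S'$ and $D_-' = D_- - \tfrac12 H^{-1}S'$: (i) $D_+', D_-'$ form a pair of SBP operators of order $q$ on $[a,b]$ with the data $H$, $S+S'$, $\mathbf{p}_0$, $\mathbf{p}_n$, $\mathbf{x}$; (ii) $D_+'$ is nullspace consistent and has the eigenvalue property, i.e. every eigenvalue of $\tilde D_+' := D_+' + H^{-1}\mathbf{p}_0\mathbf{p}_0^\top$ has strictly positive real part; (iii) every eigenpair $(\lambda,\mathbf{v})$ of $\tilde D_+ = D_+ + H^{-1}\mathbf{p}_0\mathbf{p}_0^\top$ with $\operatorname{Re}(\lambda)\ne0$ is also an eigenpair of $\tilde D_+'$; (iv) $\|D_+' - D_+\|\le\varepsilon$.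
   Context: Let $[a,b]$ be an interval with $b>a$ and $n\ge 1$. For $\mathbf{x}\in\mathbb{R}^{n+1}$, $\mathbf{x}^j$ denotes elementwise exponentiation, with $\mathbf{x}^0=\mathbf{1}=(1,\dots,1)^\top$. Matrices $D_+, D_-\in\mathbb{R}^{(n+1)\times(n+1)}$ form a pair of SBP (summation-by-parts) operators of order $q\ge 1$ on $[a,b]$ if there exist matrices $H,S\in\mathbb{R}^{(n+1)\times(n+1)}$ and vectors $\mathbf{p}_0,\mathbf{p}_n,\mathbf{x}\in\mathbb{R}^{n+1}$ such that: (A) $D_\pm \mathbf{x}^j = j\mathbf{x}^{j-1}$, $\mathbf{p}_0^\top\mathbf{x}^j = a^j$, $\mathbf{p}_n^\top \mathbf{x}^j = b^j$ for $j=0,\dots,q$ (with $0\cdot\mathbf{x}^{-1}:=\mathbf{0}$); (B) $H=H^\top$ is positive definite; (C) $HD_+ + D_+^\top H = -\mathbf{p}_0\mathbf{p}_0^\top + \mathbf{p}_n\mathbf{p}_n^\top + S$ with $S=S^\top$ positive semidefinite; (D) $HD_+ + D_-^\top H = -\mathbf{p}_0\mathbf{p}_0^\top + \mathbf{p}_n\mathbf{p}_n^\top$; (E) $\mathbf{x}=(x_0,\dots,x_n)^\top$ with $x_i\ne x_j$ for $i\ne j$. The SBP operator is called nullspace consistent if $\ker D_+=\operatorname{span}\{\mathbf{1}\}$. Set $\tilde D_+ := D_+ + H^{-1}\mathbf{p}_0\mathbf{p}_0^\top$ (with the $H,\mathbf{p}_0$ of the given data). The SBP operator has the eigenvalue property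 if every eigenvalue of $\tilde D_+$ has strictly positive real part. *)

theory Defs
  imports "HOL-Analysis.Analysis"
begin

text \<open>Vectors in R^(n+1) are modelled as real^'n with CARD('n) = n+1;
  matrices as real^'n^'n.\<close>

definition xpow :: "real^'n \<Rightarrow> nat \<Rightarrow> real^'n" where
  "xpow x j = (\<chi> i. (x $ i) ^ j)"

definition ones :: "real^'n" where
  "ones = (\<chi> i. 1)"

definition outer :: "real^'n \<Rightarrow> real^'n \<Rightarrow> real^'n^'n" where
  "outer u v = (\<chi> i k. u $ i * v $ k)"

definition symmetric_mat :: "real^'n^'n \<Rightarrow> bool" where
  "symmetric_mat A \<longleftrightarrow> transpose A = A"

definition pos_def :: "real^'n^'n \<Rightarrow> bool" where
  "pos_def A \<longleftrightarrow> symmetric_mat A \<and> (\<forall>v. v \<noteq> 0 \<longrightarrow> v \<bullet> (A *v v) > 0)"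

definition pos_semidef :: "real^'n^'n \<Rightarrow> bool" where
  "pos_semidef A \<longleftrightarrow> symmetric_mat A \<and> (\<forall>v. v \<bullet> (A *v v) \<ge> 0)"

definition sbp_pair ::
  "real \<Rightarrow> real \<Rightarrow> nat \<Rightarrow> real^'n^'n \<Rightarrow> real^'n^'n \<Rightarrow> real^'n^'n \<Rightarrow> real^'n^'n
   \<Rightarrow> real^'n \<Rightarrow> real^'n \<Rightarrow> real^'n \<Rightarrow> bool" where
  "sbp_pair a b q Dp Dm H S p0 pn x \<longleftrightarrow>
     (\<forall>j\<le>q. Dp *v xpow x j = (if j = 0 then 0 else real j *\<^sub>R xpow x (j - 1))
           \<and> Dm *v xpow x j = (if j = 0 then 0 else real j *\<^sub>R xpow x (j - 1))
           \<and> p0 \<bullet> xpow x j = a ^ j \<and> pn \<bullet> xpow x j = b ^ j)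
   \<and> pos_def H
   \<and> H ** Dp + transpose Dp ** H = - outer p0 p0 + outer pn pn + S
   \<and> pos_semidef S
   \<and> H ** Dp + transpose Dm ** H = - outer p0 p0 + outer pn pn
   \<and> (\<forall>i k. i \<noteq> k \<longrightarrow> x $ i \<noteq> x $ k)"

definition nullspace_consistent :: "real^'n^'n \<Rightarrow> bool" where
  "nullspace_consistent D \<longleftrightarrow> {v. D *v v = 0} = span {ones}"

definition cmat :: "real^'n^'n \<Rightarrow> complex^'n^'n" where
  "cmat A = (\<chi> i k. complex_of_real (A $ i $ k))"

definition eigenpair :: "real^'n^'n \<Rightarrow> complex \<Rightarrow> complex^'n \<Rightarrow> bool" where
  "eigenpair A lam v \<longleftrightarrow> v \<noteq> 0 \<and> cmat A *v v = lam *s v"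

definition Dtilde :: "real^'n^'n \<Rightarrow> real^'n^'n \<Rightarrow> real^'n \<Rightarrow> real^'n^'n" where
  "Dtilde Dp H p0 = Dp + matrix_inv H ** outer p0 p0"

definition eigenvalue_property :: "real^'n^'n \<Rightarrow> real^'n^'n \<Rightarrow> real^'n \<Rightarrow> bool" where
  "eigenvalue_property Dp H p0 \<longleftrightarrow>
     (\<forall>lam v. eigenpair (Dtilde Dp H p0) lam v \<longrightarrow> Re lam > 0)"

definition is_norm :: "(real^'n^'n \<Rightarrow> real) \<Rightarrow> bool" where
  "is_norm N \<longleftrightarrow> (\<forall>A. N A = 0 \<longleftrightarrow> A = 0) \<and> (\<forall>A B. N (A + B) \<le> N A + N B)
     \<and> (\<forall>c A. N (c *\<^sub>R A) = \<bar>c\<bar> * N A)"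

end

theory Submission
  imports Defs
begin


definition re_v :: "complex^'n \<Rightarrow> real^'n" where "re_v v = (\<chi> i. Re (v $ i))"
definition im_v :: "complex^'n \<Rightarrow> real^'n" where "im_v v = (\<chi> i. Im (v $ i))"

lemma outer_mv: "outer u v *v w = (v \<bullet> w) *\<^sub>R u"
  by (simp add: vec_eq_iff outer_def matrix_vector_mult_def inner_vec_def sum_distrib_left mult_ac)

lemma transpose_outer: "transpose (outer u v) = outer v u"
  by (simp add: vec_eq_iff outer_def transpose_def)

lemma dot_transpose: "(transpose A *v y) \<bullet> x = y \<bullet> ((A::real^'n^'m) *v x)"
  by (simp add: dot_lmul_matrix)

lemma sym_dot: "transpose S = S \<Longrightarrow> x \<bullet> ((S::real^'n^'n) *v y) = y \<bullet> (S *v x)"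
  by (metis dot_transpose inner_commute)

lemma psd_zero:
  assumes "pos_semidef S" "v \<bullet> (S *v v) = 0"
  shows "S *v v = 0"
proof -
  have sym: "transpose S = S" using assms(1) by (simp add: pos_semidef_def symmetric_mat_def)
  have ge: "\<And>u. u \<bullet> (S *v u) \<ge> 0" using assms(1) by (simp add: pos_semidef_def)
  define w where "w = S *v v"
  define c where "c = w \<bullet> (S *v v)"
  define d where "d = w \<bullet> (S *v w)"
  have d0: "d \<ge> 0" using ge d_def by simp
  have key: "\<And>t. 0 \<le> 2 * t * c + t^2 * d"
  proof -
    fix t
    have "(v + t *\<^sub>R w) \<bullet> (S *v (v + t *\<^sub>R w)) = v \<bullet> (S *v v) + t * (v \<bullet> (S *v w)) + t * (w \<bullet> (S *v v)) + t^2 * d"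
      by (simp add: matrix_vector_right_distrib matrix_vector_mult_scaleR inner_add_left inner_add_right d_def power2_eq_square algebra_simps)
    also have "v \<bullet> (S *v w) = c" using sym_dot[OF sym] c_def by metis
    finally show "0 \<le> 2 * t * c + t^2 * d" using ge[of "v + t *\<^sub>R w"] assms(2) c_def by (simp add: algebra_simps)
  qed
  have "c = 0"
  proof (rule ccontr)
    assume "c \<noteq> 0"
    have "0 \<le> 2 * (- c/(d+1)) * c + (- c/(d+1))^2 * d" by (rule key)
    moreover have "2 * (- c/(d+1)) * c + (- c/(d+1))^2 * d = c^2 * (-(d+2)) / (d+1)^2"
      using d0 by (simp add: divide_simps power2_eq_square) (simp add: algebra_simps)
    moreover have "c^2 * (-(d+2)) / (d+1)^2 < 0" using d0 \<open>c \<noteq> 0\<close>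
      by (simp add: divide_neg_pos mult_pos_neg)
    ultimately show False by linarith
  qed
  then have "w \<bullet> w = 0" by (simp add: c_def w_def)
  then show ?thesis by (simp add: w_def)
qed

lemma cmat_eig_iff:
  "cmat A *v v = lam *s v \<longleftrightarrow>
    (A *v re_v v = Re lam *\<^sub>R re_v v - Im lam *\<^sub>R im_v v \<and>
     A *v im_v v = Im lam *\<^sub>R re_v v + Re lam *\<^sub>R im_v v)"
  by (simp add: vec_eq_iff complex_eq_iff cmat_def re_v_def im_v_def matrix_vector_mult_def Re_sum Im_sum mult_ac add_ac all_conj_distrib)

lemma nz_iff: "(v::complex^'n) \<noteq> 0 \<longleftrightarrow> re_v v \<noteq> 0 \<or> im_v v \<noteq> 0"
  by (auto simp: vec_eq_iff re_v_def im_v_def complex_eq_iff)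



lemma transpose_add': "transpose (A + B) = transpose A + transpose (B::real^'n^'m)"
  by (simp add: transpose_def vec_eq_iff)
lemma mmult_add_r: "(A + B) ** C = A ** C + B ** (C::real^_^_)"
  by (simp add: matrix_matrix_mult_def vec_eq_iff sum.distrib distrib_right)

lemma perturb_identity:
  fixes H Hi X A A' :: "real^'n^'n"
  assumes "transpose H = H" "H ** Hi = mat 1" "transpose X = X"
  shows "H ** (A + c *\<^sub>R (Hi ** X)) + transpose (A' + d *\<^sub>R (Hi ** X)) ** H
     = H ** A + transpose A' ** H + (c + d) *\<^sub>R X"
proof -
  have 1: "H ** (c *\<^sub>R (Hi ** X)) = c *\<^sub>R X"
    by (metis matrix_scalar_ac matrix_mul_assoc assms(2) matrix_mul_lid)
  have "transpose Hi ** H = mat 1"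
    by (metis assms(1,2) matrix_transpose_mul transpose_mat)
  then have 2: "transpose (d *\<^sub>R (Hi ** X)) ** H = d *\<^sub>R X"
    by (simp add: transpose_scalar matrix_transpose_mul assms(3)
        flip: scalar_matrix_assoc matrix_mul_assoc)
  show ?thesis
    by (simp add: matrix_add_ldistrib transpose_add' mmult_add_r 1 2 scaleR_add_left)
qed

lemma energy:
  fixes H A Bm :: "real^'n^'n"
  assumes Hsym: "transpose H = H" and Hpos: "\<And>v. v \<noteq> 0 \<Longrightarrow> 0 < v \<bullet> (H *v v)"
    and M: "H ** A + transpose A ** H = Bm" and Bpos: "\<And>u. 0 \<le> u \<bullet> (Bm *v u)"
    and e1: "A *v vr = \<alpha> *\<^sub>R vr - \<beta> *\<^sub>R vi" and e2: "A *v vi = \<beta> *\<^sub>R vr + \<alpha> *\<^sub>R vi"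
    and nz: "vr \<noteq> 0 \<or> vi \<noteq> 0"
  shows "\<alpha> \<ge> 0 \<and> (\<alpha> = 0 \<longrightarrow> vr \<bullet> (Bm *v vr) = 0 \<and> vi \<bullet> (Bm *v vi) = 0)"
proof -
  have form: "u \<bullet> (Bm *v u) = 2 * (u \<bullet> (H *v (A *v u)))" for u
  proof -
    have "Bm *v u = H *v (A *v u) + transpose A *v (H *v u)"
      by (simp add: M[symmetric] matrix_vector_mult_add_rdistrib matrix_vector_mul_assoc del: transpose_matrix_vector)
    then have "u \<bullet> (Bm *v u) = u \<bullet> (H *v (A *v u)) + (transpose A *v (H *v u)) \<bullet> u"
      by (simp add: inner_add_right inner_commute del: transpose_matrix_vector)
    also have "(transpose A *v (H *v u)) \<bullet> u = (H *v u) \<bullet> (A *v u)"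
      by (rule dot_transpose)
    also have "\<dots> = u \<bullet> (H *v (A *v u))"
      by (metis sym_dot[OF Hsym] inner_commute)
    finally show ?thesis by simp
  qed
  have s: "vr \<bullet> (H *v vi) = vi \<bullet> (H *v vr)" by (rule sym_dot[OF Hsym])
  have "vr \<bullet> (H *v (A *v vr)) + vi \<bullet> (H *v (A *v vi))
      = \<alpha> * (vr \<bullet> (H *v vr) + vi \<bullet> (H *v vi))"
    using s by (simp add: e1 e2 matrix_vector_mult_diff_distrib matrix_vector_right_distrib
        matrix_vector_mult_scaleR inner_diff_right inner_add_right algebra_simps)
  then have eq: "vr \<bullet> (Bm *v vr) + vi \<bullet> (Bm *v vi) = 2 * \<alpha> * (vr \<bullet> (H *v vr) + vi \<bullet> (H *v vi))"
    using form[of vr] form[of vi] by simp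
  have q1: "vr \<bullet> (H *v vr) \<ge> 0" using Hpos[of vr] by (cases "vr = 0") auto
  have q2: "vi \<bullet> (H *v vi) \<ge> 0" using Hpos[of vi] by (cases "vi = 0") auto
  have qpos: "vr \<bullet> (H *v vr) + vi \<bullet> (H *v vi) > 0" using nz Hpos[of vr] Hpos[of vi] q1 q2 by auto
  have b1: "vr \<bullet> (Bm *v vr) \<ge> 0" and b2: "vi \<bullet> (Bm *v vi) \<ge> 0" using Bpos by auto
  have "\<alpha> \<ge> 0"
  proof (rule ccontr)
    assume "\<not> \<alpha> \<ge> 0"
    then have "2 * \<alpha> * (vr \<bullet> (H *v vr) + vi \<bullet> (H *v vi)) < 0"
      using qpos by (simp add: mult_neg_pos)
    then show False using eq b1 b2 by linarith
  qed
  moreover have "\<alpha> = 0 \<longrightarrow> vr \<bullet> (Bm *v vr) = 0 \<and> vi \<bullet> (Bm *v vi) = 0"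
    using eq b1 b2 by auto
  ultimately show ?thesis by blast
qed

lemma alg4:
  fixes \<alpha> \<beta> \<gamma> a1 a2 a3 a4 :: real
  assumes "\<beta>*a3 = \<alpha>*a1 - \<gamma>*a2" "\<beta>*a4 = \<gamma>*a1 + \<alpha>*a2" "-\<beta>*a1 = \<alpha>*a3 - \<gamma>*a4"
    "-\<beta>*a2 = \<gamma>*a3 + \<alpha>*a4" "\<alpha> \<noteq> 0"
  shows "a1 = 0 \<and> a2 = 0 \<and> a3 = 0 \<and> a4 = 0"
proof -
  have "a1*(\<alpha>*a1) + a2*(\<alpha>*a2) + a3*(\<alpha>*a3) + a4*(\<alpha>*a4)
     = a1*(\<beta>*a3 + \<gamma>*a2) + a2*(\<beta>*a4 - \<gamma>*a1) + a3*(-\<beta>*a1 + \<gamma>*a4) + a4*(-\<beta>*a2 - \<gamma>*a3)"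
    using assms(1-4) by (smt (verit))
  also have "\<dots> = 0" by (simp add: algebra_simps)
  finally have "\<alpha> * (a1^2 + a2^2 + a3^2 + a4^2) = 0" by (simp add: power2_eq_square algebra_simps)
  then have "a1^2 + a2^2 + a3^2 + a4^2 = 0" using assms(5) by simp
  moreover have "a1^2 \<ge> 0" "a2^2 \<ge> 0" "a3^2 \<ge> 0" "a4^2 \<ge> 0" by auto
  ultimately have "a1^2 = 0" "a2^2 = 0" "a3^2 = 0" "a4^2 = 0" by linarith+
  then show ?thesis by simp
qed

lemma Bform: "u \<bullet> ((outer p0 p0 + outer pn pn + S) *v u) = (p0 \<bullet> u)^2 + (pn \<bullet> u)^2 + u \<bullet> (S *v u)"
  by (simp add: matrix_vector_mult_add_rdistrib outer_mv inner_add_right power2_eq_square inner_commute)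

lemma sum_mv: "finite W \<Longrightarrow> (\<Sum>w\<in>W. f w) *v u = (\<Sum>w\<in>W. f w *v (u::real^'n))"
  by (induction W rule: finite_induct) (auto simp: matrix_vector_mult_add_rdistrib)



theorem theorem2:
  fixes a b \<epsilon> :: real and q :: nat
    and Dp Dm H S :: "real^'n^'n" and p0 pn x :: "real^'n"
    and N :: "real^'n^'n \<Rightarrow> real"
  assumes "CARD('n) \<ge> 2" and "a < b" and "q \<ge> 1"
    and "sbp_pair a b q Dp Dm H S p0 pn x"
    and "nullspace_consistent Dp"
    and "\<not> eigenvalue_property Dp H p0"
    and "is_norm N" and "\<epsilon> > 0"
  shows "\<exists>S'. pos_semidef S' \<and> (\<forall>j\<le>q. S' *v xpow x j = 0) \<and>
    (let Dp' = Dp + (1/2) *\<^sub>R (matrix_inv H ** S');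
         Dm' = Dm - (1/2) *\<^sub>R (matrix_inv H ** S')
     in sbp_pair a b q Dp' Dm' H (S + S') p0 pn x
      \<and> nullspace_consistent Dp' \<and> eigenvalue_property Dp' H p0
      \<and> (\<forall>lam v. Re lam \<noteq> 0 \<and> eigenpair (Dtilde Dp H p0) lam v
               \<longrightarrow> eigenpair (Dtilde Dp' H p0) lam v)
      \<and> N (Dp' - Dp) \<le> \<epsilon>)"
proof -
  define Hi where "Hi = matrix_inv H"
  have hA: "\<forall>j\<le>q. Dp *v xpow x j = (if j = 0 then 0 else real j *\<^sub>R xpow x (j - 1))
           \<and> Dm *v xpow x j = (if j = 0 then 0 else real j *\<^sub>R xpow x (j - 1))
           \<and> p0 \<bullet> xpow x j = a ^ j \<and> pn \<bullet> xpow x j = b ^ j"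
    and Hpd: "pos_def H"
    and C: "H ** Dp + transpose Dp ** H = - outer p0 p0 + outer pn pn + S"
    and Spsd: "pos_semidef S"
    and Dc: "H ** Dp + transpose Dm ** H = - outer p0 p0 + outer pn pn"
    and xd: "\<forall>i k. i \<noteq> k \<longrightarrow> x $ i \<noteq> x $ k"
    using assms(4) unfolding sbp_pair_def by auto
  have Hsym: "transpose H = H" using Hpd by (simp add: pos_def_def symmetric_mat_def)
  have Hpos: "\<And>v. v \<noteq> 0 \<Longrightarrow> 0 < v \<bullet> (H *v v)" using Hpd by (simp add: pos_def_def)
  have Hinj: "\<And>v. H *v v = 0 \<Longrightarrow> v = 0" using Hpos by force
  have "invertible H" using Hinj invertible_left_inverse matrix_left_invertible_ker by blast
  then have "\<exists>A'. H ** A' = mat 1 \<and> A' ** H = mat 1" by (simp add: invertible_def)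
  then have HHi: "H ** Hi = mat 1" and HiH: "Hi ** H = mat 1"
    unfolding Hi_def matrix_inv_def by (metis (mono_tags, lifting) someI_ex)+
  have Ssym: "transpose S = S" using Spsd by (simp add: pos_semidef_def symmetric_mat_def)
  have Sge: "\<And>u. 0 \<le> u \<bullet> (S *v u)" using Spsd by (simp add: pos_semidef_def)
  have hx0: "xpow x 0 = ones" by (simp add: xpow_def ones_def vec_eq_iff)
  have Dp1: "Dp *v ones = 0" using hA hx0 by (metis le0)
  have p01: "p0 \<bullet> ones = 1" using hA hx0 by (metis le0 power_0)
  have nsc: "{v. Dp *v v = 0} = span {ones}" using assms(5) by (simp add: nullspace_consistent_def)

  define Dt where "Dt = Dtilde Dp H p0"
  define Bm where "Bm = outer p0 p0 + outer pn pn + S"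
  have Dt_eq: "Dt = Dp + 1 *\<^sub>R (Hi ** outer p0 p0)" by (simp add: Dt_def Dtilde_def Hi_def)
  have M1: "H ** Dt + transpose Dt ** H = Bm"
    unfolding Dt_eq perturb_identity[OF Hsym HHi transpose_outer] C Bm_def
    by (simp add: algebra_simps scaleR_2)
  have Dtv: "\<And>u. Dt *v u = Dp *v u + (p0 \<bullet> u) *\<^sub>R (Hi *v p0)"
    by (simp add: Dt_eq matrix_vector_mult_add_rdistrib outer_mv matrix_scaleR_vector_ac
        flip: matrix_vector_mul_assoc scaleR_matrix_vector_assoc)
  have Bpos: "\<And>u. 0 \<le> u \<bullet> (Bm *v u)" unfolding Bm_def Bform using Sge
    by (simp add: add_nonneg_nonneg)
  have TDt: "\<And>u. transpose Dt *v (H *v u) = Bm *v u - H *v (Dt *v u)"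
    by (simp add: M1[symmetric] matrix_vector_mult_add_rdistrib matrix_vector_mul_assoc
        del: transpose_matrix_vector)

  define G where "G = {xpow x j |j. j \<le> q} \<union> {re_v v |v. \<exists>lam. Re lam \<noteq> 0 \<and> eigenpair Dt lam v}
     \<union> {im_v v |v. \<exists>lam. Re lam \<noteq> 0 \<and> eigenpair Dt lam v}"

  have imag: False if e1: "Dt *v vr = - \<beta> *\<^sub>R vi" and e2: "Dt *v vi = \<beta> *\<^sub>R vr"
      and nz: "vr \<noteq> 0 \<or> vi \<noteq> 0" and z1: "vr \<bullet> (Bm *v vr) = 0" and z2: "vi \<bullet> (Bm *v vi) = 0"
      and sr: "vr \<in> span G" and si: "vi \<in> span G" for \<beta> vr vi
  proof -
    have zz: "p0 \<bullet> u = 0 \<and> pn \<bullet> u = 0 \<and> S *v u = 0 \<and> Bm *v u = 0" if "u \<bullet> (Bm *v u) = 0" for u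
    proof -
      have "(p0 \<bullet> u)^2 + (pn \<bullet> u)^2 + u \<bullet> (S *v u) = 0" using that by (simp add: Bm_def Bform)
      moreover have "(p0 \<bullet> u)^2 \<ge> 0" "(pn \<bullet> u)^2 \<ge> 0" using Sge by auto
      ultimately have "(p0 \<bullet> u)^2 = 0" "(pn \<bullet> u)^2 = 0" "u \<bullet> (S *v u) = 0" using Sge[of u] by linarith+
      then have "p0 \<bullet> u = 0" "pn \<bullet> u = 0" "S *v u = 0" using psd_zero[OF Spsd] by auto
      then show ?thesis by (simp add: Bm_def matrix_vector_mult_add_rdistrib outer_mv inner_commute)
    qed
    note r = zz[OF z1] and i = zz[OF z2]
    have dr: "Dp *v vr = - \<beta> *\<^sub>R vi" using e1 Dtv[of vr] r by simp
    have di: "Dp *v vi = \<beta> *\<^sub>R vr" using e2 Dtv[of vi] i by simp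
    have inker: "u = 0" if "Dp *v u = 0" "p0 \<bullet> u = 0" for u
    proof -
      have "u \<in> span {ones}" using nsc that(1) by blast
      then obtain k where "u = k *\<^sub>R ones" by (auto simp: span_singleton)
      then show ?thesis using that(2) p01 by simp
    qed
    have bnz: "\<beta> \<noteq> 0"
    proof
      assume "\<beta> = 0"
      then have "vr = 0" "vi = 0" using inker dr di r i by auto
      then show False using nz by simp
    qed
    define yr where "yr = H *v vr"
    define yi where "yi = H *v vi"
    have neg: "H *v (- (\<beta> *\<^sub>R vi)) = - (\<beta> *\<^sub>R (H *v vi))"
      by (metis matrix_vector_mult_scaleR scaleR_minus_left)
    have tr: "transpose Dt *v yr = \<beta> *\<^sub>R yi"
      using TDt[of vr] r e1 by (simp add: neg yr_def yi_def matrix_vector_mult_scaleR del: transpose_matrix_vector)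
    have ti: "transpose Dt *v yi = - \<beta> *\<^sub>R yr"
      using TDt[of vi] i e2 by (simp add: yr_def yi_def matrix_vector_mult_scaleR del: transpose_matrix_vector)
    have yrw: "yr \<bullet> (Dt *v w) = \<beta> * (yi \<bullet> w)" for w
      using dot_transpose[of Dt yr w] tr by simp
    have yiw: "yi \<bullet> (Dt *v w) = - \<beta> * (yr \<bullet> w)" for w
      using dot_transpose[of Dt yi w] ti by simp
    have yrp: "yr \<bullet> (Hi *v p0) = 0"
      using sym_dot[OF Hsym, of vr "Hi *v p0"] r
      by (simp add: yr_def matrix_vector_mul_assoc HHi inner_commute)
    have yip: "yi \<bullet> (Hi *v p0) = 0"
      using sym_dot[OF Hsym, of vi "Hi *v p0"] i
      by (simp add: yi_def matrix_vector_mul_assoc HHi inner_commute)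
    have xp: "j \<le> q \<longrightarrow> yr \<bullet> xpow x j = 0 \<and> yi \<bullet> xpow x j = 0" for j
    proof (induction j)
      case 0
      have "yr \<bullet> (Dt *v xpow x 0) = 0" "yi \<bullet> (Dt *v xpow x 0) = 0"
        using hA Dtv[of "xpow x 0"] yrp yip by (simp_all add: inner_add_right)
      then show ?case using yrw yiw bnz by simp
    next
      case (Suc j)
      show ?case
      proof
        assume jq: "Suc j \<le> q"
        have h: "Dp *v xpow x (Suc j) = real (Suc j) *\<^sub>R xpow x j" using hA jq by auto
        have "yr \<bullet> (Dt *v xpow x (Suc j)) = 0" "yi \<bullet> (Dt *v xpow x (Suc j)) = 0"
          using Suc jq Dtv[of "xpow x (Suc j)"] yrp yip h by (simp_all add: inner_add_right)
        then show "yr \<bullet> xpow x (Suc j) = 0 \<and> yi \<bullet> xpow x (Suc j) = 0" using yrw yiw bnz by simp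
      qed
    qed
    have ev: "yr \<bullet> re_v v = 0 \<and> yr \<bullet> im_v v = 0 \<and> yi \<bullet> re_v v = 0 \<and> yi \<bullet> im_v v = 0"
      if "Re lam \<noteq> 0" "eigenpair Dt lam v" for lam v
    proof -
      have "Dt *v re_v v = Re lam *\<^sub>R re_v v - Im lam *\<^sub>R im_v v"
           "Dt *v im_v v = Im lam *\<^sub>R re_v v + Re lam *\<^sub>R im_v v"
        using that(2) by (simp_all add: eigenpair_def cmat_eig_iff)
      then have "\<beta> * (yi \<bullet> re_v v) = Re lam * (yr \<bullet> re_v v) - Im lam * (yr \<bullet> im_v v)"
          "\<beta> * (yi \<bullet> im_v v) = Im lam * (yr \<bullet> re_v v) + Re lam * (yr \<bullet> im_v v)"
          "- \<beta> * (yr \<bullet> re_v v) = Re lam * (yi \<bullet> re_v v) - Im lam * (yi \<bullet> im_v v)"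
          "- \<beta> * (yr \<bullet> im_v v) = Im lam * (yi \<bullet> re_v v) + Re lam * (yi \<bullet> im_v v)"
        using yrw[of "re_v v"] yrw[of "im_v v"] yiw[of "re_v v"] yiw[of "im_v v"]
        by (simp_all add: inner_diff_right inner_add_right)
      from alg4[OF this that(1)] show ?thesis by blast
    qed
    have og: "orthogonal yr g \<and> orthogonal yi g" if "g \<in> G" for g
      using that xp ev unfolding G_def orthogonal_def by blast
    have "orthogonal yr vr" using orthogonal_to_span[OF sr] og by blast
    then have "vr = 0" using Hpos[of vr] by (auto simp: orthogonal_def yr_def inner_commute)
    moreover have "orthogonal yi vi" using orthogonal_to_span[OF si] og by blast
    then have "vi = 0" using Hpos[of vi] by (auto simp: orthogonal_def yi_def inner_commute)
    ultimately show False using nz by simp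
  qed

  define U where "U = {y. \<forall>g\<in>G. orthogonal g y}"
  have subU: "subspace U" unfolding U_def by (rule subspace_orthogonal_to_vectors)
  obtain W where WU: "W \<subseteq> U" and indW: "independent W" and UW: "U \<subseteq> span W"
    using basis_exists[of U] by metis
  have finW: "finite W" using indW by (rule finiteI_independent)
  define S0 where "S0 = (\<Sum>w\<in>W. outer w w)"
  have S0v: "S0 *v u = (\<Sum>w\<in>W. (w \<bullet> u) *\<^sub>R w)" for u
    by (simp add: S0_def sum_mv[OF finW] outer_mv)
  have S0form: "u \<bullet> (S0 *v u) = (\<Sum>w\<in>W. (w \<bullet> u)^2)" for u
    by (simp add: S0v inner_sum_right power2_eq_square inner_commute)
  have S0sym: "transpose S0 = S0"
    by (simp add: S0_def transpose_def outer_def vec_eq_iff mult.commute)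
  have S0ge: "0 \<le> u \<bullet> (S0 *v u)" for u by (simp add: S0form sum_nonneg)
  have S0G: "S0 *v u = 0" if "u \<in> span G" for u
  proof -
    have "w \<bullet> u = 0" if "w \<in> W" for w
    proof -
      have "\<forall>g\<in>G. orthogonal g w" using WU that unfolding U_def by blast
      then have "orthogonal w u" using orthogonal_to_span[OF \<open>u \<in> span G\<close>, of w]
        by (simp add: orthogonal_commute)
      then show ?thesis by (simp add: orthogonal_def)
    qed
    then show ?thesis by (simp add: S0v)
  qed
  have S0zero: "u \<in> span G" if "u \<bullet> (S0 *v u) = 0" for u
  proof -
    have "(\<Sum>w\<in>W. (w \<bullet> u)^2) = 0" using that S0form by simp
    then have "\<forall>w\<in>W. (w \<bullet> u)^2 = 0" by (simp add: sum_nonneg_eq_0_iff[OF finW])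
    then have wu: "\<forall>w\<in>W. orthogonal u w" by (simp add: orthogonal_def inner_commute)
    obtain y z where y: "y \<in> span G" and z: "\<And>w. w \<in> span G \<Longrightarrow> orthogonal z w" and u: "u = y + z"
      using orthogonal_subspace_decomp_exists[of G u] by blast
    have "z \<in> U" unfolding U_def
    proof (intro CollectI ballI)
      fix g assume "g \<in> G"
      then have "orthogonal z g" using z[OF span_base] by simp
      then show "orthogonal g z" by (simp add: orthogonal_commute)
    qed
    then have "z \<in> span W" using UW by blast
    then have "orthogonal u z" using orthogonal_to_span[of z W u] wu by blast
    moreover have "orthogonal y z" using z[OF y] orthogonal_commute by blast
    ultimately have "z \<bullet> z = 0" using u by (simp add: orthogonal_def inner_add_left)
    then have "z = 0" by simp
    then show ?thesis using u y by simp
  qed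
  define f where "f = (\<lambda>v::real^'n. (Dp *v v, ones \<bullet> v))"
  have linf: "linear f" unfolding f_def
    by (rule linearI) (simp_all add: matrix_vector_right_distrib matrix_vector_mult_scaleR inner_add_right)
  have oo: "ones \<bullet> (ones::real^'n) = real CARD('n)" by (simp add: ones_def inner_vec_def)
  have cpos: "real CARD('n) > 0" by simp
  have injf: "inj f"
  proof -
    have "v = 0" if "f v = 0" for v
    proof -
      have "Dp *v v = 0" "ones \<bullet> v = 0" using that by (auto simp: f_def zero_prod_def)
      then have "v \<in> span {ones}" using nsc by blast
      then obtain k where k: "v = k *\<^sub>R ones" by (auto simp: span_singleton)
      then have "k * real CARD('n) = 0" using \<open>ones \<bullet> v = 0\<close> oo by simp
      then show ?thesis using k by simp
    qed
    then show ?thesis using linear_injective_0[OF linf] by blast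
  qed
  obtain c where c0: "c > 0" and cb: "\<And>v. c * norm v \<le> norm (f v)"
    using linear_inj_bounded_below_pos[OF linf injf] by blast
  define g where "g = (\<lambda>v::real^'n. Hi *v (S0 *v v))"
  have ling: "linear g" unfolding g_def
    by (rule linearI) (simp_all add: matrix_vector_right_distrib matrix_vector_mult_scaleR)
  obtain Bd where Bd0: "Bd > 0" and Bdb: "\<And>v. norm (g v) \<le> Bd * norm v"
    using linear_bounded_pos[OF ling] by blast
  define Nm where "Nm = N ((1/2) *\<^sub>R (Hi ** S0))"
  define \<delta> where "\<delta> = min (c / (2 * Bd)) (\<epsilon> / (\<bar>Nm\<bar> + 1))"
  have d0: "\<delta> > 0" unfolding \<delta>_def using c0 Bd0 assms(8) by simp
  have dBd: "\<delta> / 2 * Bd \<le> c / 4"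
  proof -
    have "\<delta> \<le> c / (2 * Bd)" unfolding \<delta>_def by simp
    then have "\<delta> * Bd \<le> c / (2 * Bd) * Bd" using Bd0 by (intro mult_right_mono) auto
    also have "\<dots> = c / 2" using Bd0 by simp
    finally have "\<delta> * Bd \<le> c / 2" .
    moreover have "\<delta> / 2 * Bd = (\<delta> * Bd) / 2" by simp
    ultimately show ?thesis by linarith
  qed
  have dNm: "\<delta> * Nm \<le> \<epsilon>"
  proof -
    have "\<delta> \<le> \<epsilon> / (\<bar>Nm\<bar> + 1)" unfolding \<delta>_def by simp
    then have "\<delta> * (\<bar>Nm\<bar> + 1) \<le> \<epsilon>" by (simp add: field_simps)
    moreover have "\<delta> * Nm \<le> \<delta> * (\<bar>Nm\<bar> + 1)" using d0 by (intro mult_left_mono) auto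
    ultimately show ?thesis by linarith
  qed
  define S' where "S' = \<delta> *\<^sub>R S0"
  have S'sym: "transpose S' = S'" by (simp add: S'_def transpose_scalar S0sym)
  have S'v: "S' *v u = \<delta> *\<^sub>R (S0 *v u)" for u
    by (simp add: S'_def scaleR_matrix_vector_assoc)
  have S'form: "u \<bullet> (S' *v u) = \<delta> * (u \<bullet> (S0 *v u))" for u by (simp add: S'v)
  have S'ge: "0 \<le> u \<bullet> (S' *v u)" for u using S'form S0ge d0 by simp
  have S'psd: "pos_semidef S'" using S'sym S'ge by (simp add: pos_semidef_def symmetric_mat_def)
  have pertv: "(A + (1/2) *\<^sub>R (Hi ** S')) *v u = A *v u + (\<delta>/2) *\<^sub>R (Hi *v (S0 *v u))" for A u
    by (simp add: matrix_vector_mult_add_rdistrib S'v matrix_vector_mult_scaleR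
        flip: scaleR_matrix_vector_assoc matrix_vector_mul_assoc)
  have pertv2: "(A - (1/2) *\<^sub>R (Hi ** S')) *v u = A *v u - (\<delta>/2) *\<^sub>R (Hi *v (S0 *v u))" for A u
    by (simp add: matrix_vector_mult_diff_rdistrib S'v matrix_vector_mult_scaleR
        flip: scaleR_matrix_vector_assoc matrix_vector_mul_assoc)
  have xG: "xpow x j \<in> span G" if "j \<le> q" for j using that unfolding G_def by (intro span_base) blast
  define Dp' where "Dp' = Dp + (1/2) *\<^sub>R (Hi ** S')"
  define Dm' where "Dm' = Dm - (1/2) *\<^sub>R (Hi ** S')"
  have Dp'v: "Dp' *v u = Dp *v u + (\<delta>/2) *\<^sub>R g u" for u by (simp add: Dp'_def pertv g_def)
  have Dp'ones: "Dp' *v ones = 0" using Dp'v[of ones] S0G[OF xG[of 0]] hx0 Dp1 by (simp add: g_def)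

  have part1: "sbp_pair a b q Dp' Dm' H (S + S') p0 pn x"
  proof -
    have "\<forall>j\<le>q. Dp' *v xpow x j = (if j = 0 then 0 else real j *\<^sub>R xpow x (j - 1))
           \<and> Dm' *v xpow x j = (if j = 0 then 0 else real j *\<^sub>R xpow x (j - 1))
           \<and> p0 \<bullet> xpow x j = a ^ j \<and> pn \<bullet> xpow x j = b ^ j"
      using hA S0G[OF xG] by (simp add: Dp'_def Dm'_def pertv pertv2)
    moreover have "H ** Dp' + transpose Dp' ** H = - outer p0 p0 + outer pn pn + (S + S')"
      unfolding Dp'_def perturb_identity[OF Hsym HHi S'sym] C by simp
    moreover have "H ** Dp' + transpose Dm' ** H = - outer p0 p0 + outer pn pn"
    proof -
      have eq: "Dm' = Dm + (-1/2) *\<^sub>R (Hi ** S')" by (simp add: Dm'_def)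
      show ?thesis unfolding eq Dp'_def perturb_identity[OF Hsym HHi S'sym] Dc by simp
    qed
    moreover have "pos_semidef (S + S')"
      using Ssym S'sym Sge S'ge
      by (simp add: pos_semidef_def symmetric_mat_def transpose_add' matrix_vector_mult_add_rdistrib
          inner_add_right add_nonneg_nonneg)
    ultimately show ?thesis using Hpd Spsd xd by (simp add: sbp_pair_def)
  qed
  have part2: "nullspace_consistent Dp'"
    unfolding nullspace_consistent_def
  proof (intro set_eqI iffI)
    fix v assume "v \<in> {v. Dp' *v v = 0}"
    then have v0: "Dp' *v v = 0" by simp
    define k where "k = (ones \<bullet> v) / real CARD('n)"
    define w where "w = v - k *\<^sub>R ones"
    have w1: "Dp' *v w = 0" using v0 Dp'ones
      by (simp add: w_def matrix_vector_mult_diff_distrib matrix_vector_mult_scaleR)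
    have w2: "ones \<bullet> w = 0" using oo cpos by (simp add: w_def k_def inner_diff_right)
    have Dpw: "Dp *v w = - ((\<delta>/2) *\<^sub>R g w)" using w1 Dp'v[of w] by (simp add: eq_neg_iff_add_eq_0)
    have "f w = (- ((\<delta>/2) *\<^sub>R g w), 0)" by (simp add: f_def Dpw w2)
    then have "norm (f w) = norm ((\<delta>/2) *\<^sub>R g w)" by (simp add: norm_Pair)
    also have "\<dots> = (\<delta>/2) * norm (g w)" using d0 by simp
    also have "\<dots> \<le> (\<delta>/2) * (Bd * norm w)" using Bdb d0 by (intro mult_left_mono) auto
    also have "\<dots> = (\<delta>/2 * Bd) * norm w" by simp
    also have "\<dots> \<le> (c/4) * norm w" using dBd by (intro mult_right_mono) auto
    finally have "c * norm w \<le> (c/4) * norm w" using cb[of w] by linarith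
    then have "(3/4 * c) * norm w \<le> 0" by linarith
    then have "norm w \<le> 0" using c0 by (simp add: mult_le_0_iff)
    then have "w = 0" by simp
    then have vk: "v = k *\<^sub>R ones" by (simp add: w_def)
    show "v \<in> span {ones}" unfolding vk by (intro span_scale span_base) simp
  next
    fix v :: "real^'n" assume "v \<in> span {ones}"
    then obtain k where "v = k *\<^sub>R ones" by (auto simp: span_singleton)
    then show "v \<in> {v. Dp' *v v = 0}" using Dp'ones by (simp add: matrix_vector_mult_scaleR)
  qed
  define Dt' where "Dt' = Dtilde Dp' H p0"
  have Dt'_eq: "Dt' = Dt + (1/2) *\<^sub>R (Hi ** S')"
    by (simp add: Dt'_def Dt_def Dtilde_def Dp'_def Hi_def algebra_simps)
  have Dt'v: "Dt' *v u = Dt *v u + (\<delta>/2) *\<^sub>R (Hi *v (S0 *v u))" for u by (simp add: Dt'_eq pertv)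
  have part3: "eigenvalue_property Dp' H p0"
    unfolding eigenvalue_property_def
  proof (intro allI impI)
    fix lam v assume ep: "eigenpair (Dtilde Dp' H p0) lam v"
    define vr where "vr = re_v v"
    define vi where "vi = im_v v"
    have e1: "Dt' *v vr = Re lam *\<^sub>R vr - Im lam *\<^sub>R vi"
     and e2: "Dt' *v vi = Im lam *\<^sub>R vr + Re lam *\<^sub>R vi"
      using ep by (simp_all add: eigenpair_def cmat_eig_iff Dt'_def vr_def vi_def)
    have nz: "vr \<noteq> 0 \<or> vi \<noteq> 0" using ep by (simp add: eigenpair_def nz_iff vr_def vi_def)
    have M2: "H ** Dt' + transpose Dt' ** H = Bm + S'"
      unfolding Dt'_eq perturb_identity[OF Hsym HHi S'sym] M1 by simp
    have Bpos2: "0 \<le> u \<bullet> ((Bm + S') *v u)" for u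
      using Bpos[of u] S'ge[of u] by (simp add: matrix_vector_mult_add_rdistrib inner_add_right)
    have en: "Re lam \<ge> 0 \<and> (Re lam = 0 \<longrightarrow> vr \<bullet> ((Bm + S') *v vr) = 0 \<and> vi \<bullet> ((Bm + S') *v vi) = 0)"
      by (rule energy[OF Hsym Hpos M2 Bpos2 e1 e2 nz])
    show "Re lam > 0"
    proof (rule ccontr)
      assume "\<not> Re lam > 0"
      then have r0: "Re lam = 0" using en by simp
      have split: "u \<bullet> (Bm *v u) = 0 \<and> u \<in> span G" if "u \<bullet> ((Bm + S') *v u) = 0" for u
      proof -
        have "u \<bullet> (Bm *v u) + u \<bullet> (S' *v u) = 0" using that
          by (simp add: matrix_vector_mult_add_rdistrib inner_add_right)
        then have "u \<bullet> (Bm *v u) = 0" "u \<bullet> (S' *v u) = 0" using Bpos[of u] S'ge[of u] by linarith+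
        then show ?thesis using S'form d0 S0zero by simp
      qed
      have a1: "vr \<bullet> (Bm *v vr) = 0" "vr \<in> span G" using split en r0 by auto
      have a2: "vi \<bullet> (Bm *v vi) = 0" "vi \<in> span G" using split en r0 by auto
      have "Dt *v vr = - Im lam *\<^sub>R vi" using e1 r0 Dt'v[of vr] S0G[OF a1(2)] by simp
      moreover have "Dt *v vi = Im lam *\<^sub>R vr" using e2 r0 Dt'v[of vi] S0G[OF a2(2)] by simp
      ultimately show False using imag nz a1 a2 by blast
    qed
  qed
  have part4: "\<forall>lam v. Re lam \<noteq> 0 \<and> eigenpair (Dtilde Dp H p0) lam v
               \<longrightarrow> eigenpair (Dtilde Dp' H p0) lam v"
  proof (intro allI impI)
    fix lam v assume h: "Re lam \<noteq> 0 \<and> eigenpair (Dtilde Dp H p0) lam v"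
    then have "re_v v \<in> span G" "im_v v \<in> span G" unfolding G_def Dt_def
      by (auto intro!: span_base)
    then have "Dt' *v re_v v = Dt *v re_v v" "Dt' *v im_v v = Dt *v im_v v"
      using Dt'v S0G by auto
    then show "eigenpair (Dtilde Dp' H p0) lam v"
      using h by (simp add: eigenpair_def cmat_eig_iff Dt'_def Dt_def)
  qed
  have part5: "N (Dp' - Dp) \<le> \<epsilon>"
  proof -
    have "Dp' - Dp = \<delta> *\<^sub>R ((1/2) *\<^sub>R (Hi ** S0))"
      by (simp add: Dp'_def S'_def matrix_scalar_ac flip: scalar_matrix_assoc)
    then have "N (Dp' - Dp) = \<delta> * Nm" using assms(7) d0 by (simp add: is_norm_def Nm_def)
    then show ?thesis using dNm by simp
  qed
  show ?thesis
    apply (rule exI[of _ S'])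
    using S'psd S0G[OF xG] part1 part2 part3 part4 part5
    by (simp add: S'v Let_def Dp'_def Dm'_def Hi_def)
qed

end
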